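(* Let $c,d\in(0,1]$, let $B=B(c,d)$, and define $h(x)=\dfrac{xF(c,d;c+d;x)}{\log(1/(1-x))}$ for $x\in(0,1)$. Let $p\ge1$. Then for all $x\in(0,1)$, with $z=1-(1-x)^{1/p}$, $$B\ge B\,h(z)\ge B\,h(x)\ge 1\qquad\text{and}\qquad F(c,d;c+d;z)\ge \tfrac1p F(c,d;c+d;x).$$ When $c=d=1$ one has $B=1$ and $h\equiv1$, so the first chain consists of equalities.
   Context: $F(a,b;c;x)$ is the Gaussian hypergeometric function $\sum_{n\ge0}\frac{(a)_n(b)_n}{(c)_n}\frac{x^n}{n!}$ ($|x|<1$), with $(a)_n=a(a+1)\cdots(a+n-1)$, $(a)_0=1$. $B(c,d)=\Gamma(c)\Gamma(d)/\Gamma(c+d)$ is the beta function. *)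

theory Defs
  imports "HOL-Analysis.Analysis"
begin

definition hyp2F1 :: "real \<Rightarrow> real \<Rightarrow> real \<Rightarrow> real \<Rightarrow> real" where
  "hyp2F1 a b c x = (\<Sum>n. pochhammer a n * pochhammer b n / pochhammer c n * x ^ n / fact n)"

definition Beta_fn :: "real \<Rightarrow> real \<Rightarrow> real" where
  "Beta_fn c d = Gamma c * Gamma d / Gamma (c + d)"

definition h_fn :: "real \<Rightarrow> real \<Rightarrow> real \<Rightarrow> real" where
  "h_fn c d x = x * hyp2F1 c d (c + d) x / ln (1 / (1 - x))"

end

theory Submission imports Defs begin

definition Acoef :: "real \<Rightarrow> real \<Rightarrow> nat \<Rightarrow> real" where
  "Acoef c d n = pochhammer c n * pochhammer d n / pochhammer (c + d) n / fact n"

lemma Acoef_pos: "0 < c \<Longrightarrow> 0 < d \<Longrightarrow> 0 < Acoef c d n"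
  unfolding Acoef_def by (intro divide_pos_pos mult_pos_pos pochhammer_pos) auto

lemma Acoef_Suc: "0 < c \<Longrightarrow> 0 < d \<Longrightarrow>
  Acoef c d (Suc n) = Acoef c d n * ((c + n) * (d + n)) / ((c + d + n) * (n + 1))"
proof -
  assume c: "0 < c" and d: "0 < d"
  have "pochhammer (c+d) n > 0" using c d by (intro pochhammer_pos) auto
  moreover have "c + d + n > 0" using c d by simp
  ultimately show ?thesis unfolding Acoef_def
    by (simp add: pochhammer_Suc field_simps)
qed

lemma Acoef_dec:
  assumes c: "0 < c" "c \<le> 1" and d: "0 < d" "d \<le> 1"
  shows "(Suc n + 1) * Acoef c d (Suc n) \<le> (n + 1) * Acoef c d n"
proof -
  have cd1: "c * d \<le> 1" using c d by (simp add: mult_le_one)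
  have k1: "0 \<le> (1 - c*d) * n" using cd1 by simp
  have k2: "0 \<le> c * (1 - d) + d * (1 - c)" using c d by simp
  have poly: "(n + 2) * ((c + n) * (d + n)) \<le> (n + 1)^2 * (c + d + n)"
    using k1 k2 by (simp add: power2_eq_square algebra_simps)
  have pos: "(c + d + n) * (n + 1) > 0" using c d by simp
  have "(Suc n + 1) * Acoef c d (Suc n) = Acoef c d n * ((n + 2) * ((c + n) * (d + n))) / ((c + d + n) * (n + 1))"
    using Acoef_Suc[OF c(1) d(1)] by (simp add: field_simps)
  also have "\<dots> \<le> Acoef c d n * ((n + 1)^2 * (c + d + n)) / ((c + d + n) * (n + 1))"
    using poly pos Acoef_pos[OF c(1) d(1), of n]
    by (intro divide_right_mono mult_left_mono) auto
  also have "\<dots> = (n + 1) * Acoef c d n" using pos by (simp add: power2_eq_square field_simps)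
  finally show ?thesis by (simp add: ac_simps)
qed

lemma Acoef_decseq:
  assumes "0 < c" "c \<le> 1" "0 < d" "d \<le> 1"
  shows "decseq (\<lambda>n. (real n + 1) * Acoef c d n)"
  proof (intro decseq_SucI)
  fix n
  show "(real (Suc n) + 1) * Acoef c d (Suc n) \<le> (real n + 1) * Acoef c d n"
    using Acoef_dec[OF assms, of n] by (simp add: algebra_simps)
qed

lemma Acoef_lim:
  assumes c: "0 < c" and d: "0 < d"
  shows "(\<lambda>n. (real n + 1) * Acoef c d n) \<longlonglongrightarrow> 1 / Beta_fn c d"
proof -
  let ?G = "\<lambda>z n. Gamma_series' z n"
  have lim: "(\<lambda>n. ?G (c+d) n / (?G c n * ?G d n) * (of_nat (Suc n) / of_nat n)) \<longlonglongrightarrow>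
          Gamma (c+d) / (Gamma c * Gamma d) * 1"
  proof -
    have "Gamma c > 0" "Gamma d > 0" using c d by auto
    thus ?thesis by (intro tendsto_intros Gamma_series'_LIMSEQ LIMSEQ_Suc_n_over_n) auto
  qed
  have ev: "\<forall>\<^sub>F n in sequentially. ?G (c+d) n / (?G c n * ?G d n) * (of_nat (Suc n) / of_nat n)
              = (real n + 1) * Acoef c d n"
    using eventually_gt_at_top[of 0]
  proof eventually_elim
    case (elim n)
    then obtain k where k: "n = Suc k" by (cases n) auto
    have p1: "pochhammer c n > 0" "pochhammer d n > 0" "pochhammer (c+d) n > 0"
      using c d by (auto intro!: pochhammer_pos)
    have e: "exp ((c+d) * ln (real (Suc k))) = exp (c * ln (real (Suc k))) * exp (d * ln (real (Suc k)))"
      by (simp add: distrib_right exp_add)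
    have alg: "\<And>E F P Q R f. E>0 \<Longrightarrow> F>0 \<Longrightarrow> P>0 \<Longrightarrow> Q>0 \<Longrightarrow> R>0 \<Longrightarrow> f>0 \<Longrightarrow>
      (f*(E*F)/R) / ((f*E/P)*(f*F/Q)) * (real (Suc (Suc k))/real (Suc k))
      = (real (Suc k) + 1) * (P*Q/R/(real (Suc k) * f))"
      by (simp add: field_simps)
    show ?case unfolding Gamma_series'_def Acoef_def k e diff_Suc_1 of_real_eq_id id_def fact_Suc of_nat_mult
      using p1 unfolding k
      by (intro alg) auto
  qed
  have "Gamma (c+d) / (Gamma c * Gamma d) * 1 = 1 / Beta_fn c d"
    by (simp add: Beta_fn_def)
  thus ?thesis using Lim_transform_eventually[OF lim ev] by simp
qed

lemma fin_pair:
  fixes al be :: "nat \<Rightarrow> real"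
  assumes mono: "\<And>n m. n \<le> m \<Longrightarrow> al m * be n \<le> al n * be m"
    and z: "0 \<le> z" "z \<le> x"
  shows "0 \<le> (al n * be m - al m * be n) * (z^Suc n * x^Suc m - x^Suc n * z^Suc m)"
proof (cases "n \<le> m")
  case True
  then obtain k where k: "m = n + k" using le_Suc_ex by blast
  have "z^k \<le> x^k" using z by (intro power_mono) auto
  hence "z^Suc n * x^Suc n * z^k \<le> z^Suc n * x^Suc n * x^k"
    using z by (intro mult_left_mono) auto
  hence "x^Suc n * z^Suc m \<le> z^Suc n * x^Suc m" unfolding k
    by (simp add: power_add algebra_simps)
  moreover have "al m * be n \<le> al n * be m" using mono True by auto
  ultimately show ?thesis by (intro mult_nonneg_nonneg) auto
next
  case False
  then obtain k where k: "n = m + k" using le_Suc_ex[of m n] by auto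
  have "z^k \<le> x^k" using z by (intro power_mono) auto
  hence "z^Suc m * x^Suc m * z^k \<le> z^Suc m * x^Suc m * x^k"
    using z by (intro mult_left_mono) auto
  hence "z^Suc n * x^Suc m \<le> x^Suc n * z^Suc m" unfolding k
    by (simp add: power_add algebra_simps)
  moreover have "al n * be m \<le> al m * be n" using mono False by auto
  ultimately show ?thesis by (intro mult_nonpos_nonpos) auto
qed

lemma fin_ineq:
  fixes al be :: "nat \<Rightarrow> real"
  assumes mono: "\<And>n m. n \<le> m \<Longrightarrow> al m * be n \<le> al n * be m"
    and z: "0 \<le> z" "z \<le> x"
  shows "(\<Sum>n<N. al n * x^Suc n) * (\<Sum>m<N. be m * z^Suc m)
         \<le> (\<Sum>n<N. al n * z^Suc n) * (\<Sum>m<N. be m * x^Suc m)"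
proof -
  define T where "T n m = al n * be m * (z^Suc n * x^Suc m - x^Suc n * z^Suc m)" for n m
  have S: "(\<Sum>n<N. al n * z^Suc n) * (\<Sum>m<N. be m * x^Suc m) - (\<Sum>n<N. al n * x^Suc n) * (\<Sum>m<N. be m * z^Suc m)
       = (\<Sum>n<N. \<Sum>m<N. T n m)"
  proof -
    have "(\<Sum>n<N. al n * z^Suc n) * (\<Sum>m<N. be m * x^Suc m) - (\<Sum>n<N. al n * x^Suc n) * (\<Sum>m<N. be m * z^Suc m)
      = (\<Sum>n<N. \<Sum>m<N. al n * z^Suc n * (be m * x^Suc m)) - (\<Sum>n<N. \<Sum>m<N. al n * x^Suc n * (be m * z^Suc m))"
      by (simp only: sum_product)
    also have "\<dots> = (\<Sum>n<N. \<Sum>m<N. al n * z^Suc n * (be m * x^Suc m) - al n * x^Suc n * (be m * z^Suc m))"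
      by (simp only: sum_subtractf)
    also have "\<dots> = (\<Sum>n<N. \<Sum>m<N. T n m)"
      by (intro sum.cong refl) (simp add: T_def algebra_simps)
    finally show ?thesis .
  qed
  have sw: "(\<Sum>n<N. \<Sum>m<N. T n m) = (\<Sum>n<N. \<Sum>m<N. T m n)"
    by (rule sum.swap)
  have "0 \<le> (\<Sum>n<N. \<Sum>m<N. T n m + T m n)"
  proof (intro sum_nonneg)
    fix n m
    have "T n m + T m n = (al n * be m - al m * be n) * (z^Suc n * x^Suc m - x^Suc n * z^Suc m)"
      by (simp add: T_def algebra_simps)
    thus "0 \<le> T n m + T m n" using fin_pair[OF mono z] by simp
  qed
  also have "\<dots> = 2 * (\<Sum>n<N. \<Sum>m<N. T n m)"
    by (simp add: sum.distrib sw[symmetric])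
  finally show ?thesis using S by linarith
qed

lemma inf_ineq:
  fixes al be :: "nat \<Rightarrow> real"
  assumes mono: "\<And>n m. n \<le> m \<Longrightarrow> al m * be n \<le> al n * be m"
    and z: "0 \<le> z" "z \<le> x"
    and s1: "summable (\<lambda>n. al n * x^Suc n)" and s2: "summable (\<lambda>n. al n * z^Suc n)"
    and s3: "summable (\<lambda>n. be n * x^Suc n)" and s4: "summable (\<lambda>n. be n * z^Suc n)"
  shows "(\<Sum>n. al n * x^Suc n) * (\<Sum>m. be m * z^Suc m)
         \<le> (\<Sum>n. al n * z^Suc n) * (\<Sum>m. be m * x^Suc m)"
proof (rule LIMSEQ_le)
  show "(\<lambda>N. (\<Sum>n<N. al n * x^Suc n) * (\<Sum>m<N. be m * z^Suc m)) \<longlonglongrightarrow> (\<Sum>n. al n * x^Suc n) * (\<Sum>m. be m * z^Suc m)"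
    by (intro tendsto_mult summable_LIMSEQ s1 s4)
  show "(\<lambda>N. (\<Sum>n<N. al n * z^Suc n) * (\<Sum>m<N. be m * x^Suc m)) \<longlonglongrightarrow> (\<Sum>n. al n * z^Suc n) * (\<Sum>m. be m * x^Suc m)"
    by (intro tendsto_mult summable_LIMSEQ s2 s3)
  show "\<exists>N. \<forall>n\<ge>N. (\<Sum>n<n. al n * x^Suc n) * (\<Sum>m<n. be m * z^Suc m) \<le> (\<Sum>n<n. al n * z^Suc n) * (\<Sum>m<n. be m * x^Suc m)"
    using fin_ineq[of al be z x] mono z by blast
qed


lemma C_bounds:
  assumes c: "0 < c" "c \<le> 1" and d: "0 < d" "d \<le> 1"
  shows "(real n + 1) * Acoef c d n \<le> 1" "1 / Beta_fn c d \<le> (real n + 1) * Acoef c d n"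
proof -
  have "(real n + 1) * Acoef c d n \<le> (real 0 + 1) * Acoef c d 0"
    using decseqD[OF Acoef_decseq[OF assms]] by blast
  thus "(real n + 1) * Acoef c d n \<le> 1" by (simp add: Acoef_def)
  show "1 / Beta_fn c d \<le> (real n + 1) * Acoef c d n"
    by (rule decseq_ge[OF Acoef_decseq[OF assms] Acoef_lim[OF c(1) d(1)]])
qed

lemma hyp_eq: "hyp2F1 c d (c+d) t = (\<Sum>n. Acoef c d n * t^n)"
  unfolding hyp2F1_def Acoef_def by (simp add: divide_inverse mult_ac)

lemma summ_A:
  assumes c: "0 < c" "c \<le> 1" and d: "0 < d" "d \<le> 1" and t: "0 \<le> t" "t < 1"
  shows "summable (\<lambda>n. Acoef c d n * t^n)"
proof (rule summable_comparison_test)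
  show "summable (\<lambda>n. t^n)" using t by (intro summable_geometric) auto
  show "\<exists>N. \<forall>n\<ge>N. norm (Acoef c d n * t ^ n) \<le> t ^ n"
  proof (intro exI allI impI)
    fix n
    have "Acoef c d n \<le> (real n + 1) * Acoef c d n"
      using Acoef_pos[OF c(1) d(1), of n] by (simp add: algebra_simps)
    hence "Acoef c d n \<le> 1" using C_bounds(1)[OF c d, of n] by simp
    thus "norm (Acoef c d n * t ^ n) \<le> t ^ n"
      using Acoef_pos[OF c(1) d(1), of n] t by (simp add: abs_mult mult_left_le_one_le)
  qed
qed

lemma u_eq:
  assumes c: "0 < c" "c \<le> 1" and d: "0 < d" "d \<le> 1" and t: "0 \<le> t" "t < 1"
  shows "t * hyp2F1 c d (c+d) t = (\<Sum>n. Acoef c d n * t^Suc n)"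
    "summable (\<lambda>n. Acoef c d n * t^Suc n)"
proof -
  have s: "summable (\<lambda>n. Acoef c d n * t^n)" by (rule summ_A[OF assms])
  have e: "(\<lambda>n. Acoef c d n * t^Suc n) = (\<lambda>n. t * (Acoef c d n * t^n))" by (simp add: algebra_simps)
  show "t * hyp2F1 c d (c+d) t = (\<Sum>n. Acoef c d n * t^Suc n)"
    unfolding hyp_eq e using suminf_mult[OF s, of t] by simp
  show "summable (\<lambda>n. Acoef c d n * t^Suc n)" unfolding e by (intro summable_mult s)
qed

lemma L_eq:
  fixes t :: real assumes t: "0 \<le> t" "t < 1"
  shows "(\<lambda>n. 1 / real (n+1) * t^Suc n) sums ln (1 / (1 - t))"
proof -
  have "(\<lambda>n. - ((-(-t))^n) / of_nat n) sums ln (1 + (-t))"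
    using t by (intro ln_series') auto
  hence "(\<lambda>n. - (t^n) / real n) sums ln (1 - t)" by simp
  hence "(\<lambda>n. - (t^Suc n) / real (Suc n)) sums ln (1 - t)"
    by (subst sums_Suc_iff) simp
  hence "(\<lambda>n. - (- (t^Suc n) / real (Suc n))) sums (- ln (1 - t))"
    by (rule sums_minus)
  moreover have "ln (1 / (1 - t)) = - ln (1 - t)" using t by (simp add: ln_div)
  ultimately show ?thesis by simp
qed

theorem mainTheorem4:
  fixes c d p x :: real
  assumes "0 < c" "c \<le> 1" "0 < d" "d \<le> 1" "1 \<le> p" "0 < x" "x < 1"
  defines "z \<equiv> 1 - (1 - x) powr (1 / p)"
  shows "Beta_fn c d \<ge> Beta_fn c d * h_fn c d z
       \<and> Beta_fn c d * h_fn c d z \<ge> Beta_fn c d * h_fn c d x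
       \<and> Beta_fn c d * h_fn c d x \<ge> 1
       \<and> hyp2F1 c d (c + d) z \<ge> (1 / p) * hyp2F1 c d (c + d) x"
proof -
  note c = assms(1,2) and d = assms(3,4)
  have p0: "0 < 1 / p" "1/p \<le> 1" using assms(5) by auto
  have zx: "z \<le> x" unfolding z_def using powr_mono'[of "1/p" 1 "1-x"] p0 assms(6,7) by simp
  have z0: "0 < z" unfolding z_def using powr_less_mono'[of "1-x" 0 "1/p"] p0 assms(6,7) by simp
  have z1: "z < 1" using zx assms(7) by simp
  have Bpos: "Beta_fn c d > 0" unfolding Beta_fn_def using c d by simp
  define u where "u t = (\<Sum>n. Acoef c d n * t^Suc n)" for t
  define L where "L t = ln (1 / (1 - t))" for t :: real
  have Lpos: "L t > 0" if "0 < t" "t < 1" for t unfolding L_def using that by (intro ln_gt_zero) (simp add: field_simps)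
  have Ls: "(\<lambda>n. 1 / real (n+1) * t^Suc n) sums L t" if "0 \<le> t" "t < 1" for t
    unfolding L_def using L_eq that by blast
  have us: "summable (\<lambda>n. Acoef c d n * t^Suc n)" and ueq: "t * hyp2F1 c d (c+d) t = u t"
    if "0 \<le> t" "t < 1" for t using u_eq[OF c d that] unfolding u_def by auto
  have h: "h_fn c d t = u t / L t" if "0 \<le> t" "t < 1" for t
    unfolding h_fn_def using ueq[OF that] L_def by simp
  have uleL: "u t \<le> L t" if "0 \<le> t" "t < 1" for t
  proof -
    have "u t = (\<Sum>n. Acoef c d n * t^Suc n)" by (simp add: u_def)
    also have "\<dots> \<le> (\<Sum>n. 1 / real (n+1) * t^Suc n)"
    proof (rule suminf_le)
      fix n
      have "(real n + 1) * Acoef c d n \<le> 1" by (rule C_bounds(1)[OF c d])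
      hence "Acoef c d n \<le> 1 / real (n+1)" by (simp add: field_simps)
      thus "Acoef c d n * t^Suc n \<le> 1 / real (n+1) * t^Suc n"
        using that by (intro mult_right_mono) auto
    qed (use us[OF that] Ls[OF that] in \<open>auto simp: sums_iff\<close>)
    also have "\<dots> = L t" using Ls[OF that] by (simp add: sums_iff)
    finally show ?thesis .
  qed
  have LleBu: "L t \<le> Beta_fn c d * u t" if "0 \<le> t" "t < 1" for t
  proof -
    have "L t = (\<Sum>n. 1 / real (n+1) * t^Suc n)" using Ls[OF that] by (simp add: sums_iff)
    also have "\<dots> \<le> (\<Sum>n. Beta_fn c d * (Acoef c d n * t^Suc n))"
    proof (rule suminf_le)
      fix n
      have "1 / Beta_fn c d \<le> (real n + 1) * Acoef c d n" by (rule C_bounds(2)[OF c d])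
      hence "1 / real (n+1) \<le> Beta_fn c d * Acoef c d n" using Bpos by (simp add: field_simps)
      thus "1 / real (n+1) * t^Suc n \<le> Beta_fn c d * (Acoef c d n * t^Suc n)"
        using that mult_right_mono[of "1 / real (n+1)" "Beta_fn c d * Acoef c d n" "t^Suc n"]
        by (simp add: mult_ac)
    qed (use us[OF that] Ls[OF that] in \<open>auto simp: sums_iff intro: summable_mult\<close>)
    also have "\<dots> = Beta_fn c d * u t" unfolding u_def by (rule suminf_mult[OF us[OF that]])
    finally show ?thesis .
  qed
  have key: "u x * L z \<le> u z * L x"
    unfolding u_def
  proof -
    have mono: "\<And>n m. n \<le> m \<Longrightarrow> Acoef c d m * (1 / real (n+1)) \<le> Acoef c d n * (1 / real (m+1))"
    proof -
      fix n m :: nat assume "n \<le> m"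
      hence "(real m + 1) * Acoef c d m \<le> (real n + 1) * Acoef c d n"
        using decseqD[OF Acoef_decseq[OF c d]] by blast
      thus "Acoef c d m * (1 / real (n+1)) \<le> Acoef c d n * (1 / real (m+1))"
        by (simp add: field_simps)
    qed
    have "(\<Sum>n. Acoef c d n * x^Suc n) * (\<Sum>m. 1 / real (m+1) * z^Suc m)
         \<le> (\<Sum>n. Acoef c d n * z^Suc n) * (\<Sum>m. 1 / real (m+1) * x^Suc m)"
      by (rule inf_ineq[OF mono]) (use us[of x] us[of z] Ls[of x] Ls[of z] z0 zx assms(6,7) z1 in \<open>auto simp: sums_iff\<close>)
    thus "(\<Sum>n. Acoef c d n * x ^ Suc n) * L z \<le> (\<Sum>n. Acoef c d n * z ^ Suc n) * L x"
      using Ls[of x] Ls[of z] z0 zx assms(6,7) z1 by (simp add: sums_iff)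
  qed
  have Lz: "L z = (1/p) * L x"
    unfolding L_def z_def using assms(6,7) by (simp add: ln_div)
  have Lx: "L x > 0" "L z > 0" using Lpos assms(6,7) z0 z1 by auto
  have hz: "h_fn c d z = u z / L z" and hx: "h_fn c d x = u x / L x" using h z0 z1 assms(6,7) by auto
  have 1: "Beta_fn c d * h_fn c d z \<le> Beta_fn c d"
    using uleL[of z] z0 z1 Lx Bpos unfolding hz by (simp add: pos_divide_le_eq mult_left_mono)
  have "u x / L x \<le> u z / L z" using key Lx by (simp add: divide_simps mult_ac)
  hence 2: "Beta_fn c d * h_fn c d x \<le> Beta_fn c d * h_fn c d z"
    unfolding hz hx using Bpos mult_left_mono[of "u x / L x" "u z / L z" "Beta_fn c d"] by simp
  have 3: "1 \<le> Beta_fn c d * h_fn c d x"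
    using LleBu[of x] assms(6,7) Lx unfolding hx by (simp add: le_divide_eq)
  have k2: "L x * (u x / p) \<le> L x * u z" using key unfolding Lz by (simp add: mult_ac)
  have uz: "u x / p \<le> u z"
    using mult_left_le_imp_le[OF k2] Lx by simp
  have uzpos: "0 \<le> u z" using LleBu[of z] Bpos Lx z0 z1
    by (smt (verit) zero_less_mult_iff)
  have "(1/p) * hyp2F1 c d (c+d) x = (u x / p) / x" using ueq[of x, symmetric] assms(6,7) by simp
  also have "\<dots> \<le> u z / x" using divide_right_mono[OF uz, of x] assms(6) by simp
  also have "\<dots> \<le> u z / z" using uzpos z0 zx by (simp add: divide_left_mono)
  also have "\<dots> = hyp2F1 c d (c+d) z" using ueq[of z, symmetric] z0 z1 by simp
  finally have 4: "(1/p) * hyp2F1 c d (c+d) x \<le> hyp2F1 c d (c+d) z" .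
  show ?thesis using 1 2 3 4 by simp
qed

end
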